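(* Let $\mathbf X\in\mathbb R^{n\times T}$, $k\le\min(n,T)$, $\mathbf W\in\mathbb R^{k\times n}$. Then $$\min_{\mathbf Y\in\mathbb R^{k\times T}}\max_{\mathbf M\in\mathbb R^{k\times k}}G(\mathbf Y,\mathbf M)=\max_{\mathbf M\in\mathbb R^{k\times k}}\min_{\mathbf Y\in\mathbb R^{k\times T}}G(\mathbf Y,\mathbf M)=-\frac2{T^{1/2}}\mathrm{Tr}\big((\mathbf W\mathbf X\mathbf X^\top\mathbf W^\top)^{1/2}\big),$$ where $G(\mathbf Y,\mathbf M)=-\frac2T\mathrm{Tr}(\mathbf X^\top\mathbf W^\top\mathbf Y)+\mathrm{Tr}\big(\mathbf M(\frac1T\mathbf Y\mathbf Y^\top-\mathbf I)\big)$. Consequently, with $L_{PSW}(\mathbf W,\mathbf M,\mathbf Y)=G(\mathbf Y,\mathbf M)+\mathrm{Tr}(\mathbf W^\top\mathbf W)$, one has $\max_{\mathbf M}\min_{\mathbf Y}L_{PSW}=\mathrm{Tr}\big(-\frac2{T^{1/2}}(\mathbf W\mathbf X\mathbf X^\top\mathbf W^\top)^{1/2}+\mathbf W\mathbf W^\top\big)$.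
   Context: Matrix square roots of positive semidefinite matrices are the positive semidefinite ones. *)

theory Defs
  imports "HOL-Analysis.Analysis"
begin

definition psd :: "real^'n^'n \<Rightarrow> bool" where
  "psd A \<longleftrightarrow> transpose A = A \<and> (\<forall>x. x \<bullet> (A *v x) \<ge> 0)"

definition psd_sqrt :: "real^'n^'n \<Rightarrow> real^'n^'n" where
  "psd_sqrt A = (THE B. psd B \<and> B ** B = A)"

text \<open>X is n x T, W is k x n, Y is k x T, M is k x k.\<close>
definition G :: "real^'t^'n \<Rightarrow> real^'n^'k \<Rightarrow> real^'t^'k \<Rightarrow> real^'k^'k \<Rightarrow> real" where
  "G X W Y M =
     - (2 / real CARD('t)) * trace (transpose X ** transpose W ** Y)
     + trace (M ** ((1 / real CARD('t)) *\<^sub>R (Y ** transpose Y) - mat 1))"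

definition L_PSW :: "real^'t^'n \<Rightarrow> real^'n^'k \<Rightarrow> real^'k^'k \<Rightarrow> real^'t^'k \<Rightarrow> real" where
  "L_PSW X W M Y = G X W Y M + trace (transpose W ** W)"

end

theory Submission
  imports Defs
begin

lemma sym_dot:
  fixes C :: "real^'n^'n"
  assumes "transpose C = C"
  shows "x \<bullet> (C *v y) = (C *v x) \<bullet> y"
proof -
  have "x \<bullet> (C *v y) = (x v* C) \<bullet> y" by (simp add: dot_lmul_matrix)
  also have "x v* C = transpose C *v x" by simp
  finally show ?thesis using assms by simp
qed

lemma quad_zero:
  fixes c d :: real
  assumes "\<And>t. 2*t*c + t^2*d \<le> 0"
  shows "c = 0"
proof -
  define e where "e = 1 + \<bar>d\<bar>"
  have e: "e > 0" "2*e + d > 0" unfolding e_def by auto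
  have "2*(c/e)*c + (c/e)^2*d \<le> 0" by (rule assms)
  hence "(2*(c/e)*c + (c/e)^2*d) * e^2 \<le> 0" using e by (simp add: mult_nonpos_nonneg)
  moreover have "(2*(c/e)*c + (c/e)^2*d) * e^2 = c^2 * (2*e + d)" using e
    by (simp add: field_simps power2_eq_square)
  ultimately have "c^2 * (2*e+d) \<le> 0" by simp
  hence "c^2 \<le> 0" using e by (simp add: mult_le_0_iff)
  thus ?thesis by simp
qed

lemma spectral_sub:
  fixes C :: "real^'n^'n"
  assumes sym: "transpose C = C"
  shows "subspace S \<Longrightarrow> (\<forall>x\<in>S. C *v x \<in> S) \<Longrightarrow> \<exists>B. B \<subseteq> S \<and> finite B \<and> pairwise orthogonal B \<and>
     (\<forall>b\<in>B. norm b = 1 \<and> C *v b = (b \<bullet> (C *v b)) *\<^sub>R b) \<and> S \<subseteq> span B"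
proof (induction "dim S" arbitrary: S rule: less_induct)
  case less
  show ?case
  proof (cases "S = {0}")
    case True
    then show ?thesis by (intro exI[of _ "{}"]) auto
  next
    case False
    then obtain x0 where x0: "x0 \<in> S" "x0 \<noteq> 0" using less.prems subspace_0 by blast
    define q where "q = (\<lambda>x::real^'n. x \<bullet> (C *v x))"
    define K where "K = S \<inter> sphere 0 1"
    have "compact K" unfolding K_def
      using closed_subspace[OF less.prems(1)] compact_sphere by (simp add: closed_Int_compact)
    moreover have "K \<noteq> {}"
    proof -
      have "x0 /\<^sub>R norm x0 \<in> K" unfolding K_def using x0 less.prems(1)
        by (auto simp: subspace_scale)
      thus ?thesis by blast
    qed
    moreover have "continuous_on K q"
    proof -
      have "continuous_on K (\<lambda>x. C *v x)"
        by (metis linear_continuous_on matrix_vector_mul_linear linear_conv_bounded_linear)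
      thus ?thesis unfolding q_def by (intro continuous_intros)
    qed
    ultimately obtain v where v: "v \<in> K" and vmax: "\<And>y. y \<in> K \<Longrightarrow> q y \<le> q v"
      using continuous_attains_sup by metis
    define l where "l = q v"
    have vS: "v \<in> S" and vn: "norm v = 1" using v by (auto simp: K_def)
    have vv: "v \<bullet> v = 1" using vn by (simp add: norm_eq_1)
    have qle: "q x \<le> l * (x \<bullet> x)" if "x \<in> S" for x
    proof (cases "x = 0")
      case True then show ?thesis by (simp add: q_def)
    next
      case False
      have "x /\<^sub>R norm x \<in> K" unfolding K_def using that False less.prems(1)
        by (auto simp: subspace_scale)
      hence "q (x /\<^sub>R norm x) \<le> l" using vmax l_def by blast
      moreover have "q (x /\<^sub>R norm x) = q x / (norm x)^2"
        by (simp add: q_def matrix_vector_mult_scaleR power2_eq_square field_simps)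
      ultimately have "q x / (norm x)^2 \<le> l" by simp
      hence "q x \<le> l * (norm x)^2" using False by (simp add: divide_le_eq)
      thus ?thesis by (simp add: power2_norm_eq_inner)
    qed
    have orth: "w \<bullet> (C *v v - l *\<^sub>R v) = 0" if w: "w \<in> S" for w
    proof -
      define c where "c = w \<bullet> (C *v v) - l * (v \<bullet> w)"
      define d where "d = q w - l * (w \<bullet> w)"
      have "2*t*c + t^2*d \<le> 0" for t
      proof -
        have "v + t *\<^sub>R w \<in> S" using vS w less.prems(1) by (simp add: subspace_add subspace_scale)
        hence "q (v + t *\<^sub>R w) \<le> l * ((v + t *\<^sub>R w) \<bullet> (v + t *\<^sub>R w))" by (rule qle)
        moreover have "q (v + t *\<^sub>R w) = l + 2*t*(w \<bullet> (C *v v)) + t^2 * q w"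
          using sym_dot[OF sym, of v w]
          by (simp add: q_def l_def algebra_simps inner_add_left inner_add_right power2_eq_square inner_commute)
        moreover have "(v + t *\<^sub>R w) \<bullet> (v + t *\<^sub>R w) = 1 + 2*t*(v \<bullet> w) + t^2*(w \<bullet> w)"
          using vv by (simp add: algebra_simps inner_add_left inner_add_right power2_eq_square inner_commute)
        moreover have "w \<bullet> v = v \<bullet> w" by (rule inner_commute)
        ultimately show ?thesis using vv by (simp add: c_def d_def algebra_simps power2_eq_square)
      qed
      hence "c = 0" by (rule quad_zero)
      thus ?thesis by (simp add: c_def inner_diff_right inner_commute)
    qed
    have Cv: "C *v v = l *\<^sub>R v"
    proof -
      have "C *v v \<in> S" using less.prems(2) vS by blast
      hence "C *v v - l *\<^sub>R v \<in> S" using vS less.prems(1) by (simp add: subspace_diff subspace_scale)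
      hence "(C *v v - l *\<^sub>R v) \<bullet> (C *v v - l *\<^sub>R v) = 0" by (rule orth)
      thus ?thesis by simp
    qed
    define S' where "S' = {x \<in> S. v \<bullet> x = 0}"
    have sub': "subspace S'"
    proof -
      have "S' = S \<inter> {x. v \<bullet> x = 0}" by (auto simp: S'_def)
      thus ?thesis using less.prems(1) subspace_hyperplane[of v] by (metis subspace_inter)
    qed
    have inv': "\<forall>x\<in>S'. C *v x \<in> S'"
    proof
      fix x assume x: "x \<in> S'"
      have "v \<bullet> (C *v x) = (C *v v) \<bullet> x" by (rule sym_dot[OF sym])
      also have "\<dots> = 0" using x by (simp add: Cv S'_def)
      finally show "C *v x \<in> S'" using x less.prems(2) by (auto simp: S'_def)
    qed
    have "dim S' < dim S"
    proof -
      have "v \<notin> S'" using vv by (simp add: S'_def)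
      moreover have "S' \<subseteq> S" by (auto simp: S'_def)
      ultimately have "S' \<subset> S" using vS by blast
      hence "span S' \<subset> span S" using sub' less.prems(1) by (metis span_eq_iff)
      thus ?thesis by (rule dim_psubset)
    qed
    from less.hyps[OF this sub' inv'] obtain B' where B': "B' \<subseteq> S'" "finite B'" "pairwise orthogonal B'"
      "\<forall>b\<in>B'. norm b = 1 \<and> C *v b = (b \<bullet> (C *v b)) *\<^sub>R b" "S' \<subseteq> span B'" by blast
    show ?thesis
    proof (intro exI[of _ "insert v B'"] conjI)
      show "insert v B' \<subseteq> S" using B'(1) vS by (auto simp: S'_def)
      show "finite (insert v B')" using B'(2) by simp
      show "pairwise orthogonal (insert v B')" using B'(1,3)
        by (auto simp: pairwise_insert S'_def orthogonal_def inner_commute)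
      show "\<forall>b\<in>insert v B'. norm b = 1 \<and> C *v b = (b \<bullet> (C *v b)) *\<^sub>R b"
        using B'(4) vn Cv vv by auto
      show "S \<subseteq> span (insert v B')"
      proof
        fix x assume x: "x \<in> S"
        have "x - (v \<bullet> x) *\<^sub>R v \<in> S'" using x vS vv less.prems(1)
          by (simp add: S'_def subspace_diff subspace_scale inner_diff_right)
        hence "x - (v \<bullet> x) *\<^sub>R v \<in> span (insert v B')" using B'(5) span_mono[of B' "insert v B'"] by blast
        moreover have "(v \<bullet> x) *\<^sub>R v \<in> span (insert v B')" by (simp add: span_base span_scale)
        ultimately have "x - (v \<bullet> x) *\<^sub>R v + (v \<bullet> x) *\<^sub>R v \<in> span (insert v B')" by (rule span_add)
        thus "x \<in> span (insert v B')" by simp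
      qed
    qed
  qed
qed


lemma dotT:
  fixes A :: "real^'a^'b"
  shows "x \<bullet> (A *v y) = (transpose A *v x) \<bullet> y"
  by (simp add: dot_lmul_matrix[symmetric])

lemma vec_eq_dot:
  fixes u w :: "'a::real_inner"
  assumes "\<And>x. x \<bullet> u = x \<bullet> w"
  shows "u = w"
proof -
  have "(u - w) \<bullet> (u - w) = 0" using assms[of "u-w"] by (simp add: inner_diff_right)
  thus ?thesis by simp
qed

lemma sym_from_dot:
  fixes S :: "real^'n^'n"
  assumes "\<And>x y. x \<bullet> (S *v y) = (S *v x) \<bullet> y"
  shows "transpose S = S"
proof -
  have "transpose S *v y = S *v y" for y
  proof (rule vec_eq_dot)
    fix x
    have "x \<bullet> (transpose S *v y) = (S *v x) \<bullet> y" using dotT[of x "transpose S" y] by simp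
    also have "\<dots> = x \<bullet> (S *v y)" using assms by simp
    finally show "x \<bullet> (transpose S *v y) = x \<bullet> (S *v y)" .
  qed
  thus ?thesis by (simp add: matrix_eq)
qed

lemma full_eigenbasis:
  fixes C :: "real^'n^'n"
  assumes sym: "transpose C = C"
  obtains B where "finite B" "pairwise orthogonal B" "\<And>b. b \<in> B \<Longrightarrow> norm b = 1"
    "\<And>b. b \<in> B \<Longrightarrow> C *v b = (b \<bullet> (C *v b)) *\<^sub>R b" "span B = UNIV"
proof -
  from spectral_sub[OF sym, of UNIV] obtain B where "finite B" "pairwise orthogonal B"
     "\<forall>b\<in>B. norm b = 1 \<and> C *v b = (b \<bullet> (C *v b)) *\<^sub>R b" "UNIV \<subseteq> span B"
    by auto
  thus ?thesis using that by auto
qed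

lemma orthonormal_inner:
  assumes "pairwise orthogonal B" "\<And>b. b \<in> B \<Longrightarrow> norm b = 1" "b \<in> B" "c \<in> B"
  shows "b \<bullet> c = (if b = c then 1 else 0)"
  using assms by (auto simp: pairwise_def orthogonal_def norm_eq_1)


lemma sqrt_polar:
  fixes A :: "real^'t^'k"
  assumes kt: "CARD('k) \<le> CARD('t)"
  shows "\<exists>U::real^'t^'k. psd (psd_sqrt (A ** transpose A))
     \<and> psd_sqrt (A ** transpose A) ** psd_sqrt (A ** transpose A) = A ** transpose A
     \<and> U ** transpose U = mat 1 \<and> psd_sqrt (A ** transpose A) ** U = A"
proof -
  define C where "C = A ** transpose A"
  have symC: "transpose C = C" by (simp add: C_def matrix_transpose_mul)
  have Cv: "C *v x = A *v (transpose A *v x)" for x by (simp only: C_def matrix_vector_mul_assoc)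
  obtain B where fin: "finite B" and po: "pairwise orthogonal B" and n1: "\<And>b. b \<in> B \<Longrightarrow> norm b = 1"
    and eig: "\<And>b. b \<in> B \<Longrightarrow> C *v b = (b \<bullet> (C *v b)) *\<^sub>R b" and sp: "span B = UNIV"
    using full_eigenbasis[OF symC] by metis
  define l where "l = (\<lambda>b. b \<bullet> (C *v b))"
  have eigl: "C *v b = l b *\<^sub>R b" if "b \<in> B" for b
    unfolding l_def by (rule eig[OF that])
  have ATAT: "(transpose A *v x) \<bullet> (transpose A *v y) = x \<bullet> (C *v y)" for x y
    using dotT[of x A "transpose A *v y"] by (simp add: Cv)
  have l_nonneg: "l b \<ge> 0" for b using ATAT[of b b] by (metis inner_ge_zero l_def)
  have ob: "b \<bullet> c = (if b = c then 1 else 0)" if "b \<in> B" "c \<in> B" for b c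
    using orthonormal_inner[OF po n1 that] .
  have expand: "(\<Sum>b\<in>B. (x \<bullet> b) *\<^sub>R b) = x" for x
    using orthonormal_basis_expand[OF po n1 _ fin] sp by auto
  have parseval: "x \<bullet> y = (\<Sum>b\<in>B. (x \<bullet> b) * (y \<bullet> b))" for x y
  proof -
    have "x \<bullet> y = x \<bullet> (\<Sum>b\<in>B. (y \<bullet> b) *\<^sub>R b)" using expand[of y] by simp
    thus ?thesis by (simp add: inner_sum_right mult.commute)
  qed
  have sumdelta: "(\<Sum>c\<in>B. f c * (if b = c then 1 else 0)) = f b" if "b \<in> B" for b and f :: "_ \<Rightarrow> real"
    using fin that by (simp add: if_distrib cong: if_cong)
  define f where "f = (\<lambda>x. \<Sum>b\<in>B. (sqrt (l b) * (x \<bullet> b)) *\<^sub>R b)"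
  have fapp: "f y = (\<Sum>b\<in>B. (sqrt (l b) * (y \<bullet> b)) *\<^sub>R b)" for y by (simp add: f_def)
  have linf: "linear f"
    unfolding f_def by (rule linearI) (simp_all add: inner_add_left sum.distrib algebra_simps scaleR_sum_right)
  define S where "S = matrix f"
  have Sv: "S *v x = f x" for x unfolding S_def using matrix_works[OF linf[unfolded linear_matrix_vector_mul_eq[symmetric]]] by simp
  have fb: "f c = sqrt (l c) *\<^sub>R c" if "c \<in> B" for c
  proof -
    have "f c = (\<Sum>b\<in>B. if c = b then sqrt (l b) *\<^sub>R b else 0)"
      unfolding f_def using ob that by (intro sum.cong) auto
    also have "\<dots> = sqrt (l c) *\<^sub>R c" using fin that by simp
    finally show ?thesis .
  qed
  have dotf: "x \<bullet> f y = (\<Sum>b\<in>B. sqrt (l b) * (y \<bullet> b) * (x \<bullet> b))" for x y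
    by (simp add: f_def inner_sum_right)
  have Ssym: "transpose S = S"
  proof (rule sym_from_dot)
    fix x y
    have "(S *v x) \<bullet> y = y \<bullet> f x" by (simp add: Sv inner_commute)
    thus "x \<bullet> (S *v y) = (S *v x) \<bullet> y" by (simp add: Sv dotf mult_ac)
  qed
  have Spsd: "psd S"
  proof -
    have "x \<bullet> (S *v x) = (\<Sum>b\<in>B. sqrt (l b) * (x \<bullet> b)^2)" for x
      by (simp add: Sv dotf power2_eq_square mult_ac)
    moreover have "(\<Sum>b\<in>B. sqrt (l b) * (x \<bullet> b)^2) \<ge> 0" for x
      by (intro sum_nonneg mult_nonneg_nonneg) (auto simp: l_nonneg)
    ultimately show ?thesis unfolding psd_def using Ssym by simp
  qed
  have fxb: "f x \<bullet> b = sqrt (l b) * (x \<bullet> b)" if "b \<in> B" for x b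
  proof -
    have "f x \<bullet> b = (\<Sum>c\<in>B. sqrt (l c) * (x \<bullet> c) * (if b = c then 1 else 0))"
      using dotf[of b x] ob that by (simp add: inner_commute[of "f x"] cong: sum.cong)
    also have "\<dots> = sqrt (l b) * (x \<bullet> b)" by (rule sumdelta[OF that])
    finally show ?thesis .
  qed
  have Cexp: "C *v x = (\<Sum>b\<in>B. (l b * (x \<bullet> b)) *\<^sub>R b)" for x
  proof -
    have "C *v x = C *v (\<Sum>b\<in>B. (x \<bullet> b) *\<^sub>R b)" using expand[of x] by simp
    also have "\<dots> = (\<Sum>b\<in>B. (x \<bullet> b) *\<^sub>R (C *v b))" by (simp add: vec.sum matrix_vector_mult_scaleR)
    also have "\<dots> = (\<Sum>b\<in>B. (l b * (x \<bullet> b)) *\<^sub>R b)"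
      by (rule sum.cong) (auto simp: eigl)
    finally show ?thesis .
  qed
  have ffC: "f (f x) = C *v x" for x
  proof -
    have "f (f x) = (\<Sum>b\<in>B. (sqrt (l b) * (f x \<bullet> b)) *\<^sub>R b)" by (rule fapp)
    also have "\<dots> = (\<Sum>b\<in>B. (l b * (x \<bullet> b)) *\<^sub>R b)"
      by (rule sum.cong) (auto simp: fxb mult.assoc[symmetric] l_nonneg)
    finally show ?thesis by (simp add: Cexp)
  qed
  have SS: "S ** S = C"
    by (simp add: matrix_eq matrix_vector_mul_assoc[symmetric] Sv ffC)
  have uniq: "P = S" if P: "psd P" "P ** P = C" for P
  proof -
    have Psym: "transpose P = P" and Ppos: "\<And>x. x \<bullet> (P *v x) \<ge> 0" using P(1) by (auto simp: psd_def)
    have PP: "P *v (P *v x) = C *v x" for x using P(2) by (simp add: matrix_vector_mul_assoc)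
    have Pb: "P *v b = sqrt (l b) *\<^sub>R b" if b: "b \<in> B" for b
    proof -
      define m where "m = sqrt (l b)"
      have m: "m \<ge> 0" "m * m = l b" using l_nonneg[of b] by (auto simp: m_def)
      define u where "u = P *v b - m *\<^sub>R b"
      have "P *v u + m *\<^sub>R u = P *v (P *v b) - (m*m) *\<^sub>R b"
        by (simp add: u_def algebra_simps matrix_vector_mult_scaleR)
      also have "\<dots> = 0" using eigl[OF b] by (simp add: PP m)
      finally have Pu: "P *v u + m *\<^sub>R u = 0" .
      hence "u \<bullet> (P *v u) + m * (u \<bullet> u) = 0"
        by (metis inner_add_right inner_scaleR_right inner_zero_right)
      hence A1: "u \<bullet> (P *v u) = 0" and A2: "m * (u \<bullet> u) = 0"
        using Ppos[of u] m(1) by (smt (verit) inner_ge_zero mult_nonneg_nonneg)+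
      have "u = 0"
      proof (cases "m = 0")
        case False then show ?thesis using A2 by simp
      next
        case True
        hence "P *v u = 0" using Pu by simp
        moreover have "u = P *v b" using True by (simp add: u_def)
        ultimately have "(P *v b) \<bullet> (P *v b) = b \<bullet> (P *v (P *v b))"
          using dotT[of b P "P *v b"] Psym by simp
        hence "u \<bullet> u = 0" using \<open>P *v u = 0\<close> \<open>u = P *v b\<close> by simp
        thus ?thesis by simp
      qed
      thus ?thesis by (simp add: u_def m_def)
    qed
    have "P *v x = S *v x" for x
    proof -
      have "P *v x = P *v (\<Sum>b\<in>B. (x \<bullet> b) *\<^sub>R b)" using expand[of x] by simp
      also have "\<dots> = (\<Sum>b\<in>B. (x \<bullet> b) *\<^sub>R (P *v b))" by (simp add: vec.sum matrix_vector_mult_scaleR)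
      also have "\<dots> = (\<Sum>b\<in>B. (sqrt (l b) * (x \<bullet> b)) *\<^sub>R b)"
        by (rule sum.cong) (simp_all add: Pb)
      also have "\<dots> = S *v x" by (simp only: Sv fapp)
      finally show ?thesis .
    qed
    thus ?thesis by (simp add: matrix_eq)
  qed
  have Sdef: "psd_sqrt C = S"
    unfolding psd_sqrt_def
  proof (rule the_equality)
    show "psd S \<and> S ** S = C" using Spsd SS by simp
    show "\<And>P. psd P \<and> P ** P = C \<Longrightarrow> P = S" using uniq by blast
  qed
  have n1': "b \<bullet> b = 1" if "b \<in> B" for b using n1[OF that] by (simp add: norm_eq_1)
  define B1 where "B1 = {b\<in>B. l b > 0}"
  define B0 where "B0 = {b\<in>B. l b = 0}"
  have B0eq: "B0 = B - B1" using l_nonneg by (auto simp: B0_def B1_def order.order_iff_strict)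
  define w1 where "w1 = (\<lambda>b. (1 / sqrt (l b)) *\<^sub>R (transpose A *v b))"
  have w1ip: "w1 b \<bullet> w1 c = (if b = c then 1 else 0)" if "b \<in> B1" "c \<in> B1" for b c
  proof -
    have lb: "l b > 0" and lc: "l c > 0" and bB: "b \<in> B" and cB: "c \<in> B" using that by (auto simp: B1_def)
    have "w1 b \<bullet> w1 c = (1 / sqrt (l b)) * (1 / sqrt (l c)) * (b \<bullet> (C *v c))"
      unfolding w1_def inner_scaleR_left inner_scaleR_right ATAT by (simp add: mult_ac)
    also have "\<dots> = (1 / sqrt (l b)) * (1 / sqrt (l c)) * l c * (b \<bullet> c)"
      by (simp add: eigl[OF cB])
    also have "\<dots> = (if b = c then 1 else 0)"
      using ob[OF bB cB] lb lc by (auto simp: field_simps)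
    finally show ?thesis .
  qed
  have ATb0: "transpose A *v b = 0" if "b \<in> B0" for b
  proof -
    have "(transpose A *v b) \<bullet> (transpose A *v b) = l b" unfolding ATAT l_def ..
    thus ?thesis using that by (simp add: B0_def)
  qed
  have injw1: "inj_on w1 B1"
  proof (rule inj_onI)
    fix b c assume "b \<in> B1" "c \<in> B1" "w1 b = w1 c"
    thus "b = c" using w1ip[of b b] w1ip[of b c] by (auto split: if_splits)
  qed
  define E1 where "E1 = w1 ` B1"
  have finB1: "finite B1" using fin by (simp add: B1_def)
  have cardE1: "card E1 = card B1" unfolding E1_def using injw1 by (simp add: card_image)
  have E1po: "pairwise orthogonal E1" unfolding E1_def pairwise_def orthogonal_def
    using w1ip by auto
  have E1n: "x \<bullet> x = 1" if "x \<in> E1" for x using that w1ip unfolding E1_def by auto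
  have indE1: "independent E1"
    by (rule pairwise_orthogonal_independent[OF E1po]) (use E1n in force)
  define Q where "Q = {y::real^'t. \<forall>x\<in>span E1. orthogonal x y}"
  have subQ: "subspace Q" unfolding Q_def by (rule subspace_orthogonal_to_vectors)
  have "dim {y \<in> (UNIV::(real^'t) set). \<forall>x\<in>span E1. orthogonal x y} + dim (span E1) = dim (UNIV::(real^'t) set)"
    by (rule dim_subspace_orthogonal_to_vectors) auto
  hence dimQ: "dim Q + card B1 = CARD('t)"
    using indE1 cardE1 by (simp add: Q_def dim_span dim_eq_card_independent)
  obtain E0 where E0: "E0 \<subseteq> Q" "pairwise orthogonal E0" "\<And>x. x \<in> E0 \<Longrightarrow> norm x = 1"
    "independent E0" "card E0 = dim Q"
    using orthonormal_basis_subspace[OF subQ] by metis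
  have finE0: "finite E0" using E0(4) by (rule independent_imp_finite)
  have indB: "independent B"
    by (rule pairwise_orthogonal_independent[OF po]) (use n1 in force)
  have cardB: "card B = CARD('k)"
  proof -
    have "card B = dim B" using indB by (simp add: dim_eq_card_independent)
    also have "\<dots> = dim (span B)" by (simp add: dim_span)
    finally show ?thesis using sp by simp
  qed
  have "card B0 \<le> card E0"
  proof -
    have "B1 \<subseteq> B" by (auto simp: B1_def)
    hence "card B0 = card B - card B1" using B0eq fin by (simp add: card_Diff_subset finB1)
    thus ?thesis using E0(5) dimQ cardB kt by linarith
  qed
  then obtain g where g: "g ` B0 \<subseteq> E0" "inj_on g B0"
    using card_le_inj[of B0 E0] finE0 fin by (auto simp: B0_def)
  define w where "w = (\<lambda>b. if l b > 0 then w1 b else g b)"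
  have wip: "w b \<bullet> w c = (if b = c then 1 else 0)" if "b \<in> B" "c \<in> B" for b c
  proof -
    have orthQ: "w1 b \<bullet> y = 0" if "b \<in> B1" "y \<in> Q" for b y
    proof -
      have "w1 b \<in> span E1" using that by (auto simp: E1_def intro: span_base)
      thus ?thesis using that by (auto simp: Q_def orthogonal_def)
    qed
    have g0: "g b \<bullet> g c = (if b = c then 1 else 0)" if "b \<in> B0" "c \<in> B0" for b c
    proof (cases "b = c")
      case True
      have "g b \<in> E0" using g that by auto
      thus ?thesis using True E0(3) by (simp add: norm_eq_1)
    next
      case False
      hence "g b \<noteq> g c" using g(2) that by (auto simp: inj_on_def)
      moreover have "g b \<in> E0" "g c \<in> E0" using g that by auto
      ultimately show ?thesis using E0(2) False by (auto simp: pairwise_def orthogonal_def)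
    qed
    show ?thesis
    proof (cases "l b > 0"; cases "l c > 0")
      assume "l b > 0" "l c > 0" thus ?thesis using w1ip that by (simp add: w_def B1_def)
    next
      assume "l b > 0" "\<not> l c > 0"
      hence "c \<in> B0" "b \<in> B1" using that l_nonneg[of c] by (auto simp: B0_def B1_def)
      moreover have "g c \<in> Q" using g E0(1) \<open>c \<in> B0\<close> by auto
      ultimately show ?thesis using orthQ \<open>l b > 0\<close> \<open>\<not> l c > 0\<close> by (auto simp: w_def)
    next
      assume "\<not> l b > 0" "l c > 0"
      hence "b \<in> B0" "c \<in> B1" using that l_nonneg[of b] by (auto simp: B0_def B1_def)
      moreover have "g b \<in> Q" using g E0(1) \<open>b \<in> B0\<close> by auto
      ultimately show ?thesis using orthQ[of c "g b"] \<open>\<not> l b > 0\<close> \<open>l c > 0\<close>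
        by (auto simp: w_def inner_commute)
    next
      assume "\<not> l b > 0" "\<not> l c > 0"
      hence "b \<in> B0" "c \<in> B0" using that l_nonneg[of b] l_nonneg[of c] by (auto simp: B0_def)
      thus ?thesis using g0 \<open>\<not> l b > 0\<close> \<open>\<not> l c > 0\<close> by (simp add: w_def)
    qed
  qed
  have sqw: "sqrt (l b) *\<^sub>R w b = transpose A *v b" if "b \<in> B" for b
  proof (cases "l b > 0")
    case True thus ?thesis by (simp add: w_def w1_def)
  next
    case False
    hence "l b = 0" using l_nonneg[of b] by simp
    thus ?thesis using ATb0[of b] that by (simp add: B0_def)
  qed
  define V where "V = (\<lambda>x. \<Sum>b\<in>B. (x \<bullet> b) *\<^sub>R w b)"
  have linV: "linear V"
    unfolding V_def by (rule linearI) (simp_all add: inner_add_left sum.distrib algebra_simps scaleR_sum_right)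
  define U where "U = transpose (matrix V)"
  have UT: "transpose U *v x = V x" for x
    unfolding U_def using matrix_works[OF linV[unfolded linear_matrix_vector_mul_eq[symmetric]]] by simp
  have VS: "V (S *v x) = transpose A *v x" for x
  proof -
    have "V (S *v x) = (\<Sum>b\<in>B. (x \<bullet> b) *\<^sub>R (sqrt (l b) *\<^sub>R w b))"
      unfolding V_def by (rule sum.cong) (simp_all add: Sv fxb)
    also have "\<dots> = (\<Sum>b\<in>B. (x \<bullet> b) *\<^sub>R (transpose A *v b))"
      by (rule sum.cong) (simp_all add: sqw)
    also have "\<dots> = transpose A *v (\<Sum>b\<in>B. (x \<bullet> b) *\<^sub>R b)"
      by (simp add: vec.sum matrix_vector_mult_scaleR)
    finally show ?thesis using expand[of x] by simp
  qed
  have Vapp: "V z = (\<Sum>b\<in>B. (z \<bullet> b) *\<^sub>R w b)" for z by (simp add: V_def)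
  have wV: "w b \<bullet> V y = y \<bullet> b" if b: "b \<in> B" for b y
  proof -
    have "w b \<bullet> V y = (\<Sum>c\<in>B. (y \<bullet> c) * (w b \<bullet> w c))"
      by (simp only: Vapp[of y] inner_sum_right inner_scaleR_right)
    also have "\<dots> = (\<Sum>c\<in>B. (y \<bullet> c) * (if b = c then 1 else 0))"
      using wip b by (intro sum.cong) auto
    also have "\<dots> = y \<bullet> b" by (rule sumdelta[OF b])
    finally show ?thesis .
  qed
  have VV: "V x \<bullet> V y = x \<bullet> y" for x y
  proof -
    have "V x \<bullet> V y = (\<Sum>b\<in>B. (x \<bullet> b) * (w b \<bullet> V y))"
      by (simp only: Vapp[of x] inner_sum_left inner_scaleR_left)
    also have "\<dots> = (\<Sum>b\<in>B. (x \<bullet> b) * (y \<bullet> b))"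
      by (rule sum.cong) (simp_all add: wV)
    finally show ?thesis using parseval[of x y] by simp
  qed
  have UU: "U ** transpose U = mat 1"
  proof -
    have "(U ** transpose U) *v y = mat 1 *v y" for y
    proof -
      have "U *v V y = y"
      proof (rule vec_eq_dot)
        fix x
        have "x \<bullet> (U *v V y) = (transpose U *v x) \<bullet> V y" by (rule dotT)
        thus "x \<bullet> (U *v V y) = x \<bullet> y" by (simp add: UT VV del: transpose_matrix_vector)
      qed
      thus ?thesis by (simp add: matrix_vector_mul_assoc[symmetric] UT del: transpose_matrix_vector)
    qed
    thus ?thesis by (simp add: matrix_eq)
  qed
  have SU: "S ** U = A"
  proof -
    have "(transpose U ** S) *v x = transpose A *v x" for x
      by (simp add: matrix_vector_mul_assoc[symmetric] UT VS del: transpose_matrix_vector)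
    hence "transpose U ** S = transpose A" by (simp add: matrix_eq del: transpose_matrix_vector)
    hence "transpose (S ** U) = transpose A" using Ssym by (simp add: matrix_transpose_mul)
    thus ?thesis by (metis transpose_transpose)
  qed
  show ?thesis using Sdef Spsd SS UU SU unfolding C_def by auto
qed


lemma mm_diff_left: "((P::real^'a^'b) - Q) ** R = P ** R - Q ** R"
  by (simp add: matrix_matrix_mult_def vec_eq_iff sum_subtractf algebra_simps)
lemma mm_diff_right: "(R::real^'a^'b) ** (P - Q) = R ** P - R ** Q"
  by (simp add: matrix_matrix_mult_def vec_eq_iff sum_subtractf algebra_simps)
lemma mm_scale_left: "((c::real) *\<^sub>R (P::real^'a^'b)) ** Q = c *\<^sub>R (P ** Q)"
  by (simp add: matrix_matrix_mult_def vec_eq_iff sum_distrib_left algebra_simps)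
lemma mm_scale_right: "(P::real^'a^'b) ** ((c::real) *\<^sub>R Q) = c *\<^sub>R (P ** Q)"
  by (simp add: matrix_matrix_mult_def vec_eq_iff sum_distrib_left algebra_simps)
lemma transpose_diff: "transpose ((P::real^'a^'b) - Q) = transpose P - transpose Q"
  by (simp add: transpose_def vec_eq_iff)
lemma trace_scaleR: "trace ((c::real) *\<^sub>R (P::real^'a^'a)) = c * trace P"
  by (simp add: trace_def sum_distrib_left)
lemma trace_transpose: "trace (transpose (P::real^'a^'a)) = trace P"
  by (simp add: trace_def transpose_def)

lemma trace_psd_nonneg:
  fixes S :: "real^'k^'k" and Z :: "real^'t^'k"
  assumes "psd S"
  shows "trace (transpose Z ** (S ** Z)) \<ge> 0"
proof -
  have "trace (transpose Z ** (S ** Z)) = (\<Sum>j\<in>UNIV. column j Z \<bullet> (S *v column j Z))"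
    by (simp add: trace_def matrix_matrix_mult_def transpose_def column_def inner_vec_def
        matrix_vector_mult_def sum_distrib_left mult_ac)
  also have "\<dots> \<ge> 0" using assms by (intro sum_nonneg) (simp add: psd_def)
  finally show ?thesis .
qed


theorem proposition5:
  fixes X :: "real^'t^'n" and W :: "real^'n^'k"
  assumes "CARD('k) \<le> CARD('n)" and "CARD('k) \<le> CARD('t)"
  defines "v \<equiv> - (2 / sqrt (real CARD('t))) * trace (psd_sqrt (W ** X ** transpose X ** transpose W))"
  shows "(\<exists>Y0. (\<forall>Y. (SUP M. ereal (G X W Y0 M)) \<le> (SUP M. ereal (G X W Y M)))
              \<and> (\<exists>M0. \<forall>M. G X W Y0 M \<le> G X W Y0 M0)
              \<and> (SUP M. ereal (G X W Y0 M)) = ereal v)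
       \<and> (\<exists>M0. (\<forall>M. (INF Y. ereal (G X W Y M)) \<le> (INF Y. ereal (G X W Y M0)))
              \<and> (\<exists>Y0. \<forall>Y. G X W Y0 M0 \<le> G X W Y M0)
              \<and> (INF Y. ereal (G X W Y M0)) = ereal v)
       \<and> (SUP M. INF Y. ereal (L_PSW X W M Y)) =
           ereal (trace (- (2 / sqrt (real CARD('t))) *\<^sub>R psd_sqrt (W ** X ** transpose X ** transpose W)
                        + W ** transpose W))"
proof -
  define A where "A = W ** X"
  have AA: "W ** X ** transpose X ** transpose W = A ** transpose A"
    by (simp add: A_def matrix_transpose_mul matrix_mul_assoc)
  define S where "S = psd_sqrt (A ** transpose A)"
  obtain U :: "real^'t^'k" where Spsd: "psd S" and UU: "U ** transpose U = mat 1" and SU: "S ** U = A"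
    using sqrt_polar[OF assms(2), of A] unfolding S_def by blast
  have Ssym: "transpose S = S" using Spsd by (simp add: psd_def)
  define T where "T = real CARD('t)"
  define r where "r = sqrt T"
  have T: "T > 0" by (simp add: T_def)
  have r: "r > 0" "r * r = T" using T by (auto simp: r_def)
  have v: "v = - (2 / r) * trace S" by (simp add: v_def r_def T_def AA S_def)
  have Gdef: "G X W Y M = - (2 / T) * trace (transpose A ** Y)
      + trace (M ** ((1 / T) *\<^sub>R (Y ** transpose Y) - mat 1))" for Y M
    by (simp add: G_def T_def A_def matrix_transpose_mul)
  have UtS: "transpose U ** S = transpose A"
    using SU Ssym by (metis matrix_transpose_mul)
  have trAU: "trace (transpose A ** U) = trace S"
  proof -
    have "trace (transpose A ** U) = trace (transpose U ** (S ** U))"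
      by (simp add: UtS matrix_mul_assoc)
    also have "\<dots> = trace ((S ** U) ** transpose U)" by (rule trace_mul_sym)
    also have "\<dots> = trace S" by (simp add: UU matrix_mul_assoc[symmetric])
    finally show ?thesis .
  qed
  define Y0 where "Y0 = r *\<^sub>R U"
  define M0 where "M0 = (1 / r) *\<^sub>R S"
  have F1: "G X W Y0 M = v" for M
  proof -
    have "(1 / T) *\<^sub>R (Y0 ** transpose Y0) - mat 1 = 0"
      using r T by (simp add: Y0_def transpose_scalar mm_scale_left mm_scale_right UU)
    hence "G X W Y0 M = - (2 / T) * trace (transpose A ** Y0)" by (simp add: Gdef trace_def)
    also have "\<dots> = - (2 / T) * r * trace S" by (simp add: Y0_def mm_scale_right trace_scaleR trAU)
    also have "\<dots> = v" using r(1) by (simp add: v r(2)[symmetric] field_simps)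
    finally show ?thesis .
  qed
  have F2: "G X W Y M0 \<ge> v" for Y
  proof -
    define Z where "Z = Y - r *\<^sub>R U"
    have "0 \<le> trace (transpose Z ** (S ** Z))" by (rule trace_psd_nonneg[OF Spsd])
    also have "trace (transpose Z ** (S ** Z)) = trace (transpose Y ** (S ** Y))
       - r * trace (transpose U ** (S ** Y)) - r * trace (transpose Y ** (S ** U))
       + r * r * trace (transpose U ** (S ** U))"
      by (simp add: Z_def transpose_diff transpose_scalar mm_diff_left mm_diff_right mm_scale_left
          mm_scale_right trace_sub trace_add trace_scaleR algebra_simps)
    also have "trace (transpose U ** (S ** U)) = trace S"
      using trAU by (simp add: UtS matrix_mul_assoc)
    also have "trace (transpose U ** (S ** Y)) = trace (transpose A ** Y)"
      by (simp add: UtS matrix_mul_assoc)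
    also have "trace (transpose Y ** (S ** U)) = trace (transpose A ** Y)"
      by (metis SU trace_transpose matrix_transpose_mul transpose_transpose)
    also have "trace (transpose Y ** (S ** Y)) = trace (S ** (Y ** transpose Y))"
      by (metis trace_mul_sym matrix_mul_assoc)
    finally have ineq: "0 \<le> trace (S ** (Y ** transpose Y)) - 2 * r * trace (transpose A ** Y) + T * trace S"
      using r by simp
    have "G X W Y M0 = - (2 / T) * trace (transpose A ** Y)
        + (1 / r) * (1 / T) * trace (S ** (Y ** transpose Y)) - (1 / r) * trace S"
      by (simp add: Gdef M0_def mm_diff_right mm_scale_left mm_scale_right trace_sub trace_scaleR)
    also have "\<dots> = v + (trace (S ** (Y ** transpose Y)) - 2 * r * trace (transpose A ** Y) + T * trace S) / (r * T)"
      using r(1) by (simp add: v r(2)[symmetric] field_simps)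
    finally show ?thesis using ineq r T by simp
  qed
  have F3: "G X W Y0 M0 = v" by (rule F1)
  have P1: "(\<exists>Y0. (\<forall>Y. (SUP M. ereal (G X W Y0 M)) \<le> (SUP M. ereal (G X W Y M)))
              \<and> (\<exists>M0. \<forall>M. G X W Y0 M \<le> G X W Y0 M0)
              \<and> (SUP M. ereal (G X W Y0 M)) = ereal v)"
  proof (intro exI[of _ Y0] conjI allI)
    show sup0: "(SUP M. ereal (G X W Y0 M)) = ereal v" by (simp add: F1)
    fix Y
    have "ereal v \<le> ereal (G X W Y M0)" using F2 by simp
    also have "\<dots> \<le> (SUP M. ereal (G X W Y M))" by (rule SUP_upper) simp
    finally show "(SUP M. ereal (G X W Y0 M)) \<le> (SUP M. ereal (G X W Y M))" using sup0 by simp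
  next
    show "\<exists>M0. \<forall>M. G X W Y0 M \<le> G X W Y0 M0" by (simp add: F1)
  qed
  have inf0: "(INF Y. ereal (G X W Y M0)) = ereal v"
  proof (rule antisym)
    show "(INF Y. ereal (G X W Y M0)) \<le> ereal v" using F3 by (metis INF_lower UNIV_I)
    show "ereal v \<le> (INF Y. ereal (G X W Y M0))" using F2 by (intro INF_greatest) simp
  qed
  have P2: "(\<exists>M0. (\<forall>M. (INF Y. ereal (G X W Y M)) \<le> (INF Y. ereal (G X W Y M0)))
              \<and> (\<exists>Y0. \<forall>Y. G X W Y0 M0 \<le> G X W Y M0)
              \<and> (INF Y. ereal (G X W Y M0)) = ereal v)"
  proof (intro exI[of _ M0] conjI allI)
    fix M
    have "(INF Y. ereal (G X W Y M)) \<le> ereal (G X W Y0 M)" by (rule INF_lower) simp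
    thus "(INF Y. ereal (G X W Y M)) \<le> (INF Y. ereal (G X W Y M0))" using F1 inf0 by simp
  next
    show "\<exists>Y0. \<forall>Y. G X W Y0 M0 \<le> G X W Y M0" using F2 F3 by metis
  qed (rule inf0)
  define c where "c = trace (transpose W ** W)"
  have Ldef: "L_PSW X W M Y = G X W Y M + c" for M Y by (simp add: L_PSW_def c_def)
  have P3: "(SUP M. INF Y. ereal (L_PSW X W M Y)) = ereal (v + c)"
  proof (rule antisym)
    show "(SUP M. INF Y. ereal (L_PSW X W M Y)) \<le> ereal (v + c)"
    proof (rule SUP_least)
      fix M
      have "(INF Y. ereal (L_PSW X W M Y)) \<le> ereal (L_PSW X W M Y0)" by (rule INF_lower) simp
      thus "(INF Y. ereal (L_PSW X W M Y)) \<le> ereal (v + c)" by (simp add: Ldef F1)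
    qed
    have "ereal (v + c) \<le> (INF Y. ereal (L_PSW X W M0 Y))"
      using F2 by (intro INF_greatest) (simp add: Ldef)
    also have "\<dots> \<le> (SUP M. INF Y. ereal (L_PSW X W M Y))" by (rule SUP_upper) simp
    finally show "ereal (v + c) \<le> (SUP M. INF Y. ereal (L_PSW X W M Y))" .
  qed
  have "trace (- (2 / sqrt (real CARD('t))) *\<^sub>R psd_sqrt (W ** X ** transpose X ** transpose W)
                        + W ** transpose W) = v + c"
    using trace_mul_sym[of W "transpose W"] by (simp add: trace_add trace_sub trace_scaleR v_def c_def)
  with P1 P2 P3 show ?thesis by simp
qed

end
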